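(* Let $P$ be a lattice-face $d$-simplex with vertices $v_1,\dots,v_{d+1}$. For every $\sigma\in\mathfrak S_d$, every $1\le k\le d$ and every $0\le j\le k-1$, $$\frac{\mathfrak m(\sigma,k;j)}{\det Y(\sigma,k)}\in\mathbb Z .$$
   Context: Write $v_i=(x_{i,1},\dots,x_{i,d})$. $Y(\sigma,k)$ is the $k\times k$ matrix with rows $(1,x_{\sigma(r),1},\dots,x_{\sigma(r),k-1})$, $r=1,\dots,k$. Let $A(\sigma,k)$ be the $k\times(k+1)$ matrix with rows $(1,x_{\sigma(r),1},\dots,x_{\sigma(r),k})$, $r=1,\dots,k$, with columns indexed $1,\dots,k+1$; $\mathfrak m(\sigma,k;j)$ is the determinant of the $k\times k$ matrix obtained from $A(\sigma,k)$ by deleting column $j+1$ (so $\mathfrak m(\sigma,k;k)=\det Y(\sigma,k)$). Lattice-face polytopes are defined recursively, with $\pi:\mathbb R^d\to\mathbb R^{d-1}$ forgetting the last coordinate: a segment in $\mathbb R$ is lattice-face if its endpoints are integers; for $d\ge2$, a $d$-polytope $P\subset\mathbb R^d$ with vertex set $V$ is lattice-face if for every $d$-element $U\subset V$: (a) $\pi(\mathrm{conv}(U))$ is a lattice-face polytope in $\mathbb R^{d-1}$, and (b) $\pi(H_U\cap\mathbb Z^d)=\mathbb Z^{d-1}$, $H_U$ the affine span of $U$. *)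

theory Defs
  imports Complex_Main "HOL-Combinatorics.Permutations" "Jordan_Normal_Form.Determinant"
begin

text \<open>Points of R^d are modelled as functions nat => real whose coordinates
outside {1..d} vanish; coordinate i of p is p i.\<close>

type_synonym pt = "nat \<Rightarrow> real"

definition Rd :: "nat \<Rightarrow> pt set" where
  "Rd d = {p. \<forall>i. (i = 0 \<or> d < i) \<longrightarrow> p i = 0}"

definition lattice_pts :: "nat \<Rightarrow> pt set" where
  "lattice_pts d = {p \<in> Rd d. \<forall>i\<in>{1..d}. p i \<in> \<int>}"

definition proj :: "nat \<Rightarrow> pt \<Rightarrow> pt" where
  "proj d p = (\<lambda>i. if i = d then 0 else p i)"

definition conv_hull :: "pt set \<Rightarrow> pt set" where
  "conv_hull V = {x. \<exists>c. (\<forall>v\<in>V. 0 \<le> c v) \<and> sum c V = 1 \<and> x = (\<lambda>i. \<Sum>v\<in>V. c v * v i)}"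

definition aff_span :: "pt set \<Rightarrow> pt set" where
  "aff_span V = {x. \<exists>c. sum c V = 1 \<and> x = (\<lambda>i. \<Sum>v\<in>V. c v * v i)}"

definition aff_indep :: "pt set \<Rightarrow> bool" where
  "aff_indep V \<longleftrightarrow> finite V \<and> (\<forall>v\<in>V. v \<notin> aff_span (V - {v}))"

definition verts :: "pt set \<Rightarrow> pt set" where
  "verts S = {p \<in> S. p \<notin> conv_hull (S - {p})}"

text \<open>lattice_face d V: V is the vertex set of a d-dimensional polytope in R^d
  that is lattice-face (recursive definition).\<close>
fun lattice_face :: "nat \<Rightarrow> pt set \<Rightarrow> bool" where
  "lattice_face 0 V = False"
| "lattice_face (Suc 0) V \<longleftrightarrow> finite V \<and> V \<subseteq> Rd 1 \<and> card V = 2 \<and> (\<forall>v\<in>V. v 1 \<in> \<int>)"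
| "lattice_face (Suc (Suc n)) V \<longleftrightarrow>
     finite V \<and> V \<subseteq> Rd (Suc (Suc n)) \<and> verts V = V \<and>
     (\<exists>W\<subseteq>V. card W = n + 3 \<and> aff_indep W) \<and>
     (\<forall>U\<subseteq>V. card U = Suc (Suc n) \<longrightarrow>
        lattice_face (Suc n) (verts (proj (Suc (Suc n)) ` U)) \<and>
        proj (Suc (Suc n)) ` (aff_span U \<inter> lattice_pts (Suc (Suc n))) = lattice_pts (Suc n))"

text \<open>Y(sigma,k): k x k matrix with rows (1, x_{sigma r,1},...,x_{sigma r,k-1}), r = 1..k
  (Jordan_Normal_Form matrices are 0-indexed).\<close>
definition Ymat :: "(nat \<Rightarrow> pt) \<Rightarrow> (nat \<Rightarrow> nat) \<Rightarrow> nat \<Rightarrow> real mat" where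
  "Ymat v \<sigma> k = mat k k (\<lambda>(r, c). if c = 0 then 1 else v (\<sigma> (r + 1)) c)"

text \<open>A(sigma,k) has rows (1, x_{sigma r,1},...,x_{sigma r,k}); m(sigma,k;j) is the
  determinant after deleting column j+1 (1-indexed), i.e. 0-indexed column j.\<close>
definition Amat_entry :: "(nat \<Rightarrow> pt) \<Rightarrow> (nat \<Rightarrow> nat) \<Rightarrow> nat \<Rightarrow> nat \<Rightarrow> real" where
  "Amat_entry v \<sigma> r c = (if c = 0 then 1 else v (\<sigma> (r + 1)) c)"

definition minor_m :: "(nat \<Rightarrow> pt) \<Rightarrow> (nat \<Rightarrow> nat) \<Rightarrow> nat \<Rightarrow> nat \<Rightarrow> real" where
  "minor_m v \<sigma> k j = det (mat k k (\<lambda>(r, c). Amat_entry v \<sigma> r (if c < j then c else c + 1)))"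

end

theory Submission
  imports Defs
begin

definition YY :: "(nat \<Rightarrow> pt) \<Rightarrow> nat \<Rightarrow> real mat" where
  "YY q m = mat m m (\<lambda>(r, c). if c = 0 then 1 else q r c)"

definition MM :: "(nat \<Rightarrow> pt) \<Rightarrow> nat \<Rightarrow> nat \<Rightarrow> real mat" where
  "MM q m j = mat m m (\<lambda>(r, c). (if (if c < j then c else c + 1) = 0 then 1 else q r (if c < j then c else c + 1)))"

lemma det_Ints:
  assumes A: "(A :: real mat) \<in> carrier_mat n n" and I: "\<And>i j. i < n \<Longrightarrow> j < n \<Longrightarrow> A $$ (i,j) \<in> \<int>"
  shows "det A \<in> \<int>"
proof -
  have "det A = (\<Sum> p \<in> {p. p permutes {0 ..< n}}. signof p * (\<Prod> i = 0 ..< n. A $$ (i, p i)))"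
    using det_def'[OF A] .
  also have "\<dots> \<in> \<int>"
  proof (rule Ints_sum)
    fix p assume "p \<in> {p. p permutes {0 ..< n}}"
    then have "p permutes {0..<n}" by simp
    then have "\<And>i. i \<in> {0..<n} \<Longrightarrow> p i < n" using permutes_in_image by fastforce
    then have "(\<Prod> i = 0 ..< n. A $$ (i, p i)) \<in> \<int>" by (auto intro!: Ints_prod I)
    moreover have "(signof p :: real) \<in> \<int>" by (simp add: sign_def)
    ultimately show "signof p * (\<Prod> i = 0 ..< n. A $$ (i, p i)) \<in> \<int>" by (rule Ints_mult[rotated])
  qed
  finally show ?thesis .
qed

lemma YY_carrier[simp]: "YY q m \<in> carrier_mat m m" by (simp add: YY_def)
lemma MM_carrier[simp]: "MM q m j \<in> carrier_mat m m" by (simp add: MM_def)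

lemma aff_sum_reindex:
  assumes "inj_on q {0..<m}"
  shows "(\<Sum>v\<in>q ` {0..<m}. g v * v i) = (\<Sum>r\<in>{0..<m}. g (q r) * q r i)"
    and "sum g (q ` {0..<m}) = (\<Sum>r\<in>{0..<m}. g (q r))"
proof -
  show "(\<Sum>v\<in>q ` {0..<m}. g v * v i) = (\<Sum>r\<in>{0..<m}. g (q r) * q r i)"
    using sum.reindex[OF assms, of "\<lambda>v. g v * v i"] by simp
  show "sum g (q ` {0..<m}) = (\<Sum>r\<in>{0..<m}. g (q r))"
    using sum.reindex[OF assms, of g] by simp
qed

lemma lemA:
  assumes inj: "inj_on q {0..<m}" and R: "\<And>r. r < m \<Longrightarrow> q r \<in> Rd (m - 1)"
    and ai: "aff_indep (q ` {0..<m})"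
  shows "det (YY q m) \<noteq> 0"
proof
  assume "det (YY q m) = 0"
  then have "det (transpose_mat (YY q m)) = 0" using det_transpose[OF YY_carrier] by simp
  then obtain c where c: "c \<in> carrier_vec m" "c \<noteq> 0\<^sub>v m" "transpose_mat (YY q m) *\<^sub>v c = 0\<^sub>v m"
    using det_0_iff_vec_prod_zero_field[of "transpose_mat (YY q m)" m] by auto
  have col: "(\<Sum>r<m. (if i = 0 then 1 else q r i) * c $ r) = 0" if "i < m" for i
  proof -
    have "(transpose_mat (YY q m) *\<^sub>v c) $ i = 0" using c(3) that by simp
    then show ?thesis using that c(1) by (simp add: YY_def scalar_prod_def lessThan_atLeast0)
  qed
  obtain r0 where r0: "r0 < m" "c $ r0 \<noteq> 0" using c(1,2) by (auto simp: vec_eq_iff)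
  define I where "I = {0..<m} - {r0}"
  have img: "q ` {0..<m} - {q r0} = q ` I" using inj r0 unfolding I_def by (auto simp: inj_on_def)
  have injI: "inj_on q I" using inj unfolding I_def by (auto simp: inj_on_def)
  define g where "g = (\<lambda>v. - c $ (inv_into {0..<m} q v) / c $ r0)"
  have gq: "g (q s) = - c $ s / c $ r0" if "s \<in> I" for s
    using that inv_into_f_f[OF inj] unfolding g_def I_def by auto
  have split: "(\<Sum>r<m. f r) = f r0 + (\<Sum>r\<in>I. f r)" for f :: "nat \<Rightarrow> real"
    using sum.remove[of "{..<m}" r0 f] r0 unfolding I_def by (simp add: lessThan_atLeast0)
  have "q r0 \<in> aff_span (q ` I)"
    unfolding aff_span_def
  proof (intro CollectI exI conjI)
    have "sum g (q ` I) = (\<Sum>s\<in>I. g (q s))" using sum.reindex[OF injI] by simp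
    also have "\<dots> = (\<Sum>s\<in>I. - c $ s / c $ r0)" using gq by simp
    also have "\<dots> = - (\<Sum>s\<in>I. c $ s) / c $ r0" by (simp add: sum_negf sum_divide_distrib)
    also have "(\<Sum>s\<in>I. c $ s) = - c $ r0" using col[of 0] split[of "\<lambda>r. c $ r"] r0 by simp
    finally show "sum g (q ` I) = 1" using r0 by simp
    show "q r0 = (\<lambda>i. \<Sum>v\<in>q ` I. g v * v i)"
    proof
      fix i
      have "(\<Sum>v\<in>q ` I. g v * v i) = (\<Sum>s\<in>I. g (q s) * q s i)" using sum.reindex[OF injI] by simp
      also have "\<dots> = (\<Sum>s\<in>I. - (c $ s * q s i) / c $ r0)" using gq by simp
      also have "\<dots> = - (\<Sum>s\<in>I. c $ s * q s i) / c $ r0" by (simp add: sum_negf sum_divide_distrib)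
      also have "\<dots> = q r0 i"
      proof (cases "i = 0 \<or> m \<le> i")
        case True
        then have "\<And>s. s < m \<Longrightarrow> q s i = 0" using R unfolding Rd_def by fastforce
        then show ?thesis using r0 unfolding I_def by auto
      next
        case False
        then have "(\<Sum>r<m. q r i * c $ r) = 0" using col[of i] by simp
        then have "(\<Sum>s\<in>I. c $ s * q s i) = - c $ r0 * q r0 i" using split[of "\<lambda>r. q r i * c $ r"]
          by (simp add: mult.commute)
        then show ?thesis using r0 by simp
      qed
      finally show "q r0 i = (\<Sum>v\<in>q ` I. g v * v i)" by simp
    qed
  qed
  moreover have "q r0 \<notin> aff_span (q ` {0..<m} - {q r0})" using ai r0 unfolding aff_indep_def by auto
  ultimately show False using img by simp
qed

lemma YY_dims[simp]: "dim_row (YY q m) = m" "dim_col (YY q m) = m" by (simp_all add: YY_def)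
lemma MM_dims[simp]: "dim_row (MM q m j) = m" "dim_col (MM q m j) = m" by (simp_all add: MM_def)

lemma lemB:
  assumes inj: "inj_on q {0..<m}" and m: "1 \<le> m" and dY: "det (YY q m) \<noteq> 0"
    and lat: "\<And>e. e \<in> lattice_pts (m - 1) \<Longrightarrow> \<exists>x \<in> aff_span (q ` {0..<m}) \<inter> lattice_pts m. proj m x = e"
    and j: "j < m"
  shows "det (MM q m j) / det (YY q m) \<in> \<int>"
proof -
  let ?Y = "YY q m"
  have "?Y \<in> Units (ring_mat TYPE(real) m ())" by (rule det_non_zero_imp_unit[OF YY_carrier dY])
  then obtain B where B: "B \<in> carrier_mat m m" "B * ?Y = 1\<^sub>m m" "?Y * B = 1\<^sub>m m"
    unfolding Units_def ring_mat_def by auto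
  define a where "a i = (\<Sum>l\<in>{0..<m}. B $$ (i,l) * q l m)" for i
  have YB: "(\<Sum>i\<in>{0..<m}. ?Y $$ (r,i) * B $$ (i,l)) = (if r = l then 1 else 0)" if "r < m" "l < m" for r l
  proof -
    have "(?Y * B) $$ (r,l) = (if r = l then 1 else 0)" using B(3) that by simp
    moreover have "(?Y * B) $$ (r,l) = (\<Sum>i\<in>{0..<m}. ?Y $$ (r,i) * B $$ (i,l))"
      using that B(1) by (simp add: scalar_prod_def)
    ultimately show ?thesis by simp
  qed
  have BY: "(\<Sum>l\<in>{0..<m}. B $$ (i,l) * ?Y $$ (l,c)) = (if i = c then 1 else 0)" if "i < m" "c < m" for i c
  proof -
    have "(B * ?Y) $$ (i,c) = (if i = c then 1 else 0)" using B(2) that by simp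
    moreover have "(B * ?Y) $$ (i,c) = (\<Sum>l\<in>{0..<m}. B $$ (i,l) * ?Y $$ (l,c))"
      using that B(1) by (simp add: scalar_prod_def)
    ultimately show ?thesis by simp
  qed
  have Ya: "(\<Sum>i\<in>{0..<m}. ?Y $$ (r,i) * a i) = q r m" if "r < m" for r
  proof -
    have "(\<Sum>i\<in>{0..<m}. ?Y $$ (r,i) * a i) = (\<Sum>l\<in>{0..<m}. (\<Sum>i\<in>{0..<m}. ?Y $$ (r,i) * B $$ (i,l)) * q l m)"
      unfolding a_def by (simp only: sum_distrib_left sum_distrib_right, subst sum.swap, simp add: mult_ac)
    also have "\<dots> = (\<Sum>l\<in>{0..<m}. (if r = l then q l m else 0))" using YB that by (intro sum.cong) auto
    also have "\<dots> = q r m" using that by simp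
    finally show ?thesis .
  qed
  have key: "a 0 + (\<Sum>i\<in>{1..<m}. a i * e i) \<in> \<int>" if e: "e \<in> lattice_pts (m - 1)" for e
  proof -
    obtain x where x: "x \<in> aff_span (q ` {0..<m})" "x \<in> lattice_pts m" "proj m x = e" using lat[OF e] by auto
    obtain g where g: "sum g (q ` {0..<m}) = 1" "x = (\<lambda>i. \<Sum>v\<in>q ` {0..<m}. g v * v i)"
      using x(1) unfolding aff_span_def by auto
    have g1: "(\<Sum>r\<in>{0..<m}. g (q r)) = 1" using g(1) aff_sum_reindex(2)[OF inj] by simp
    have xi: "x i = (\<Sum>r\<in>{0..<m}. g (q r) * q r i)" for i using g(2) aff_sum_reindex(1)[OF inj] by simp
    have "x m \<in> \<int>" using x(2) m unfolding lattice_pts_def by auto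
    have col: "(\<Sum>r\<in>{0..<m}. g (q r) * ?Y $$ (r,i)) = (if i = 0 then 1 else e i)" if "i < m" for i
    proof (cases "i = 0")
      case True then show ?thesis using g1 that by (simp add: YY_def)
    next
      case False
      have "e i = x i" using x(3) that unfolding proj_def by auto
      then show ?thesis using False that xi[of i] by (simp add: YY_def)
    qed
    have "x m = (\<Sum>r\<in>{0..<m}. g (q r) * (\<Sum>i\<in>{0..<m}. ?Y $$ (r,i) * a i))" using xi Ya by simp
    also have "\<dots> = (\<Sum>i\<in>{0..<m}. (\<Sum>r\<in>{0..<m}. g (q r) * ?Y $$ (r,i)) * a i)"
      by (simp only: sum_distrib_left sum_distrib_right, subst sum.swap, simp add: mult_ac)
    also have "\<dots> = (\<Sum>i\<in>{0..<m}. (if i = 0 then 1 else e i) * a i)" using col by (intro sum.cong) auto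
    also have "\<dots> = a 0 + (\<Sum>i\<in>{1..<m}. a i * e i)"
    proof -
      have "{0..<m} = insert 0 {1..<m}" using m by auto
      then show ?thesis by (simp add: mult.commute)
    qed
    finally show ?thesis using \<open>x m \<in> \<int>\<close> by simp
  qed
  have aint: "a i \<in> \<int>" if "i < m" for i
  proof -
    have "(\<lambda>_. 0) \<in> lattice_pts (m - 1)" by (simp add: lattice_pts_def Rd_def)
    from key[OF this] have a0: "a 0 \<in> \<int>" by simp
    show ?thesis
    proof (cases "i = 0")
      case True then show ?thesis using a0 by simp
    next
      case False
      let ?e = "(\<lambda>l. if l = i then 1 else 0) :: pt"
      have "?e \<in> lattice_pts (m - 1)" using False that by (auto simp: lattice_pts_def Rd_def)
      have "(\<Sum>l\<in>{1..<m}. a l * ?e l) = (\<Sum>l\<in>{1..<m}. if l = i then a l else 0)"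
        by (intro sum.cong) auto
      also have "\<dots> = a i" using False that by simp
      finally have "(\<Sum>l\<in>{1..<m}. a l * ?e l) = a i" .
      with key[OF \<open>?e \<in> lattice_pts (m - 1)\<close>] have "a 0 + a i \<in> \<int>" by simp
      then have "(a 0 + a i) - a 0 \<in> \<int>" using a0 by (rule Ints_diff)
      then show ?thesis by simp
    qed
  qed
  define T where "T = B * MM q m j"
  have T: "T \<in> carrier_mat m m" unfolding T_def using B(1) by simp
  have "?Y * T = MM q m j" unfolding T_def
    using B by (simp add: assoc_mult_mat[symmetric, of _ m m _ m _ m])
  then have "det (MM q m j) = det ?Y * det T" using det_mult[OF YY_carrier[of q m] T] by simp
  then have eq: "det (MM q m j) / det ?Y = det T" using dY by simp
  have "det T \<in> \<int>"
  proof (rule det_Ints[OF T])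
    fix i c assume ic: "i < m" "c < m"
    have Tic: "T $$ (i,c) = (\<Sum>l\<in>{0..<m}. B $$ (i,l) * MM q m j $$ (l,c))"
      unfolding T_def using B(1) ic by (simp add: scalar_prod_def row_def col_def MM_def)
    show "T $$ (i,c) \<in> \<int>"
    proof (cases "(if c < j then c else c + 1) < m")
      case True
      let ?f = "if c < j then c else c + 1"
      have "T $$ (i,c) = (\<Sum>l\<in>{0..<m}. B $$ (i,l) * ?Y $$ (l,?f))"
        unfolding Tic using True ic by (intro sum.cong) (auto simp: MM_def YY_def)
      also have "\<dots> = (if i = ?f then 1 else 0)" using BY ic True by blast
      finally show ?thesis by simp
    next
      case False
      then have "c + 1 = m" "\<not> c < j" using ic j by (auto split: if_splits)
      then have "T $$ (i,c) = a i"
        unfolding Tic a_def using ic m by (intro sum.cong) (auto simp: MM_def)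
      then show ?thesis using aint ic by simp
    qed
  qed
  then show ?thesis using eq by simp
qed

lemma lf_card: assumes lf: "lattice_face m V" shows "finite V \<and> m + 1 \<le> card V \<and> V \<subseteq> Rd m"
proof -
  consider (A) "m = 0" | (B) "m = Suc 0" | (C) n where "m = Suc (Suc n)"
    by (metis not0_implies_Suc)
  then show ?thesis
  proof cases
  case A then show ?thesis using lf by simp
next
  case B then show ?thesis using lf by simp
next
  case (C n)
  have "lattice_face (Suc (Suc n)) V" using lf C by simp
  then obtain W where "W \<subseteq> V" "card W = n + 3" "finite V" "V \<subseteq> Rd m"
    unfolding lattice_face.simps(3) C by blast
  then show ?thesis using card_mono[of V W] C by auto
qed
qed

lemma aff_span_single: "aff_span {u} = {u}"
  unfolding aff_span_def by auto

lemma lf_indep: assumes "lattice_face m V" "card V = m + 1" shows "aff_indep V"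
proof -
  consider (A) "m = 0" | (B) "m = Suc 0" | (C) n where "m = Suc (Suc n)"
    by (metis not0_implies_Suc)
  then show ?thesis
  proof cases
  case A then show ?thesis using assms by simp
next
  case B
  have "card V = 2" using assms(2) B by simp
  then obtain a b where ab: "V = {a, b}" "a \<noteq> b" by (meson card_2_iff)
  have d: "{a,b} - {a} = {b}" "{a,b} - {b} = {a}" using ab by auto
  have "a \<notin> aff_span ({a,b} - {a})" unfolding d(1) aff_span_single using ab(2) by simp
  moreover have "b \<notin> aff_span ({a,b} - {b})" unfolding d(2) aff_span_single using ab(2) by simp
  ultimately show ?thesis unfolding aff_indep_def ab(1) by blast
next
  case (C n)
  have "lattice_face (Suc (Suc n)) V" using assms(1) C by simp
  then obtain W where W: "W \<subseteq> V" "card W = n + 3" "aff_indep W" "finite V"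
    unfolding lattice_face.simps(3) by blast
  have "card W = card V" using W(2) assms(2) C by simp
  then have "W = V" using card_subset_eq[of V W] W(1,4) by blast
  then show ?thesis using W by simp
qed
qed

lemma lf_step:
  assumes lf: "lattice_face (Suc (Suc n)) V" and U: "U \<subseteq> V" "card U = Suc (Suc n)"
  shows "verts (proj (Suc (Suc n)) ` U) = proj (Suc (Suc n)) ` U"
    and "inj_on (proj (Suc (Suc n))) U"
    and "lattice_face (Suc n) (proj (Suc (Suc n)) ` U)"
    and "proj (Suc (Suc n)) ` (aff_span U \<inter> lattice_pts (Suc (Suc n))) = lattice_pts (Suc n)"
proof -
  let ?p = "proj (Suc (Suc n))"
  have l1: "lattice_face (Suc n) (verts (?p ` U))"
    and l2: "?p ` (aff_span U \<inter> lattice_pts (Suc (Suc n))) = lattice_pts (Suc n)"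
    using lf U unfolding lattice_face.simps(3)[of n V] by blast+
  have fU: "finite U" using U(2) card.infinite by fastforce
  have sub: "verts (?p ` U) \<subseteq> ?p ` U" unfolding verts_def by auto
  have c1: "Suc n + 1 \<le> card (verts (?p ` U))" using lf_card[OF l1] by simp
  have c2: "card (?p ` U) \<le> card U" using card_image_le[OF fU] .
  have c3: "card (verts (?p ` U)) \<le> card (?p ` U)" using card_mono[OF _ sub] fU by simp
  show eq: "verts (?p ` U) = ?p ` U"
    using card_subset_eq[OF _ sub] fU c1 c2 c3 U(2) by simp
  show "inj_on ?p U" using eq_card_imp_inj_on[OF fU] c1 c2 c3 U(2) by (simp add: eq_card_imp_inj_on fU)
  show "lattice_face (Suc n) (?p ` U)" using l1 eq by simp
  show "?p ` (aff_span U \<inter> lattice_pts (Suc (Suc n))) = lattice_pts (Suc n)" by (rule l2)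
qed

lemma proj_YY: "k \<le> M \<Longrightarrow> YY (\<lambda>r. proj M (q r)) k = YY q k"
  by (rule eq_matI) (auto simp: YY_def proj_def)

lemma proj_MM: "k < M \<Longrightarrow> MM (\<lambda>r. proj M (q r)) k j = MM q k j"
  by (rule eq_matI) (auto simp: MM_def proj_def)

lemma det1: "(A :: real mat) \<in> carrier_mat 1 1 \<Longrightarrow> det A = A $$ (0,0)"
  by (subst det_upper_triangular[of _ 1]) (auto simp: upper_triangular_def diag_mat_def)

lemma lemC:
  "lattice_face m V \<Longrightarrow> inj_on q {0..<k} \<Longrightarrow> q ` {0..<k} \<subseteq> V \<Longrightarrow> 1 \<le> k \<Longrightarrow> k \<le> m \<Longrightarrow>
   det (YY q k) \<noteq> 0 \<and> (\<forall>j<k. det (MM q k j) / det (YY q k) \<in> \<int>)"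
proof (induction m arbitrary: V q)
  case 0
  then show ?case by simp
next
  case (Suc m)
  note lf = Suc.prems(1) and inj = Suc.prems(2) and qV = Suc.prems(3)
  consider (e1) "k = Suc m" "m = 0" | (e2) n where "k = Suc m" "m = Suc n" | (lt) n where "k < Suc m" "m = Suc n"
  proof (cases "k = Suc m")
    case True
    then show ?thesis using that by (cases m) auto
  next
    case False
    then have "k < Suc m" using Suc.prems(5) by simp
    moreover obtain n where "m = Suc n" using Suc.prems(4) \<open>k < Suc m\<close> by (cases m) auto
    ultimately show ?thesis using that by blast
  qed
  then show ?case
  proof cases
    case e1
    then have k1: "k = 1" by simp
    have "YY q k $$ (0,0) = 1" using k1 by (simp add: YY_def)
    then have dY: "det (YY q k) = 1" using det1[of "YY q k"] k1 by simp
    have "q 0 \<in> V" using qV k1 by auto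
    then have "q 0 1 \<in> \<int>" using lf e1 by simp
    moreover have "MM q k 0 $$ (0,0) = q 0 1" using k1 by (simp add: MM_def)
    ultimately have "det (MM q k 0) \<in> \<int>" using det1[of "MM q k 0"] k1 by simp
    then show ?thesis using dY k1 by auto
  next
    case (e2 n)
    define U where "U = q ` {0..<k}"
    have cU: "card U = Suc (Suc n)" unfolding U_def using card_image[OF inj] e2 by simp
    have lfk: "lattice_face (Suc (Suc n)) V" using lf e2 by simp
    have UV: "U \<subseteq> V" using qV U_def by simp
    note st = lf_step[OF lfk UV cU]
    define q' where "q' = (\<lambda>r. proj k (q r))"
    have img: "q' ` {0..<k} = proj k ` U" unfolding q'_def U_def by auto
    have inj': "inj_on q' {0..<k}" using st(2) inj unfolding q'_def U_def e2
      by (auto simp: inj_on_def)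
    have R: "q' r \<in> Rd (k - 1)" if "r < k" for r
    proof -
      have "q' r \<in> proj k ` U" using img that by auto
      then show ?thesis using lf_card[OF st(3)] e2 by auto
    qed
    have "card (proj k ` U) = Suc n + 1" using card_image[OF st(2)] cU e2 by simp
    then have ai: "aff_indep (q' ` {0..<k})" using lf_indep[OF st(3)] img e2 by simp
    have dY: "det (YY q k) \<noteq> 0" using lemA[OF inj' R ai] proj_YY[of k k q] unfolding q'_def by simp
    have lat: "\<exists>x \<in> aff_span (q ` {0..<k}) \<inter> lattice_pts k. proj k x = e" if "e \<in> lattice_pts (k - 1)" for e
    proof -
      have "e \<in> proj k ` (aff_span U \<inter> lattice_pts k)" using st(4) that e2 by simp
      then show ?thesis unfolding U_def by auto
    qed
    show ?thesis using lemB[OF inj _ dY lat] Suc.prems(4) dY by auto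
  next
    case (lt n)
    define M where "M = Suc (Suc n)"
    have lfM: "lattice_face M V" using lf lt M_def by simp
    define S where "S = q ` {0..<k}"
    have cS: "card S = k" unfolding S_def using card_image[OF inj] by simp
    have SV: "S \<subseteq> V" using qV S_def by simp
    have fV: "finite V" and cV: "M + 1 \<le> card V" using lf_card[OF lfM] by auto
    have "card (V - S) = card V - k" using card_Diff_subset[OF _ SV] cS finite_subset[OF SV fV] by simp
    then have "M - k \<le> card (V - S)" using cV by simp
    then obtain U' where U': "U' \<subseteq> V - S" "card U' = M - k" "finite U'"
      by (rule obtain_subset_with_card_n)
    define U where "U = S \<union> U'"
    have cU: "card U = Suc (Suc n)"
      unfolding U_def using card_Un_disjoint[of S U'] U' cS finite_subset[OF SV fV] lt M_def by auto
    have UV: "U \<subseteq> V" using U' SV U_def by auto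
    note st = lf_step[OF lfM[unfolded M_def] UV cU]
    define q' where "q' = (\<lambda>r. proj M (q r))"
    have SU: "S \<subseteq> U" unfolding U_def by simp
    have "inj_on (proj M \<circ> q) {0..<k}"
      using comp_inj_on[OF inj inj_on_subset[OF st(2)]] SU unfolding S_def M_def by simp
    then have inj': "inj_on q' {0..<k}" unfolding q'_def by (simp add: o_def)
    have sub': "q' ` {0..<k} \<subseteq> proj M ` U" using SU unfolding q'_def S_def by auto
    have IH: "det (YY q' k) \<noteq> 0 \<and> (\<forall>j<k. det (MM q' k j) / det (YY q' k) \<in> \<int>)"
      using Suc.IH[of "proj M ` U" q'] st(3) inj' sub' Suc.prems(4) lt M_def by auto
    have "YY q' k = YY q k" unfolding q'_def by (rule proj_YY) (use lt M_def in simp)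
    moreover have "MM q' k j = MM q k j" for j unfolding q'_def by (rule proj_MM) (use lt M_def in simp)
    ultimately show ?thesis using IH by simp
  qed
qed

theorem mainTheorem8:
  fixes d :: nat and v :: "nat \<Rightarrow> pt" and \<sigma> :: "nat \<Rightarrow> nat" and k j :: nat
  assumes "1 \<le> d"
    and "inj_on v {1..d+1}"
    and "lattice_face d (v ` {1..d+1})"
    and "\<sigma> permutes {1..d}"
    and "1 \<le> k" and "k \<le> d" and "j \<le> k - 1"
  shows "det (Ymat v \<sigma> k) \<noteq> 0 \<and> minor_m v \<sigma> k j / det (Ymat v \<sigma> k) \<in> \<int>"
proof -
  define q where "q = (\<lambda>r. v (\<sigma> (r + 1)))"
  have sig: "\<sigma> (r + 1) \<in> {1..d}" if "r < k" for r
    using permutes_in_image[OF assms(4)] that assms(6) by auto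
  have inj: "inj_on q {0..<k}"
  proof (rule inj_onI)
    fix x y assume xy: "x \<in> {0..<k}" "y \<in> {0..<k}" "q x = q y"
    then have "\<sigma> (x + 1) = \<sigma> (y + 1)" using sig[of x] sig[of y] assms(2) unfolding q_def inj_on_def by auto
    then show "x = y" using permutes_inj[OF assms(4)] unfolding inj_def by auto
  qed
  have sub: "q ` {0..<k} \<subseteq> v ` {1..d+1}"
  proof
    fix x assume "x \<in> q ` {0..<k}"
    then obtain r where r: "r < k" "x = v (\<sigma> (r + 1))" unfolding q_def by auto
    then have "\<sigma> (r + 1) \<in> {1..d+1}" using sig[OF r(1)] by auto
    then show "x \<in> v ` {1..d+1}" using r(2) by blast
  qed
  have Y: "Ymat v \<sigma> k = YY q k" unfolding Ymat_def YY_def q_def by simp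
  have M: "minor_m v \<sigma> k j = det (MM q k j)" unfolding minor_m_def MM_def q_def Amat_entry_def by simp
  have "j < k" using assms(5,7) by simp
  then show ?thesis using lemC[OF assms(3) inj sub assms(5,6)] Y M by simp
qed

end
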